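(* Let $k\ge1$ be an integer, $a\in\mathbb{R}$ with $0<|a|<1$, $\sigma>0$, and let $\{\alpha_n\}$ be a sequence of real numbers with $|\alpha_n|\le\sigma$ for all $n$. If $$\sigma<\frac{1-|a|}{1-|a|^k},$$ then every real solution of $$x_{n+1}=ax_n+\alpha_n\tanh\big(x_n-a^kx_{n-k}\big),\quad n\ge0,$$ converges to $0$.
   Context: Solutions are generated by iteration from arbitrary real initial values $x_0,x_{-1},\dots,x_{-k}$. *)

theory Defs
  imports Complex_Main
begin

end

theory Submission imports Defs begin
lemma tanh_le: fixes x :: real assumes "0 \<le> x" shows "tanh x \<le> x"
proof -
  have "(\<lambda>t. t - tanh t) 0 \<le> (\<lambda>t. t - tanh t) x"
  proof (rule DERIV_nonneg_imp_nondecreasing[OF assms])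
    fix t :: real
    have "cosh t \<noteq> 0" by (metis cosh_real_pos less_irrefl)
    then have "((\<lambda>t. t - tanh t) has_field_derivative 1 - (1 - tanh t ^ 2)) (at t)"
      by (intro derivative_eq_intros) auto
    then show "\<exists>y. ((\<lambda>t. t - tanh t) has_field_derivative y) (at t) \<and> y \<ge> 0" by force
  qed
  then show ?thesis by simp
qed
lemma abs_tanh_le: "\<bar>tanh (x::real)\<bar> \<le> \<bar>x\<bar>"
  using tanh_le[of "\<bar>x\<bar>"] by (metis abs_ge_zero tanh_real_abs)
lemma telesc: fixes x :: "int \<Rightarrow> real"
  shows "x m - a ^ k * x (m - int k) = (\<Sum>j<k. a ^ j * (x (m - int j) - a * x (m - int j - 1)))"
proof (induction k)
  case 0 then show ?case by simp
next
  case (Suc k)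
  then show ?case by (simp add: algebra_simps)
qed
theorem mainTheorem8:
  fixes k :: nat and a \<sigma> :: real and \<alpha> :: "nat \<Rightarrow> real" and x :: "int \<Rightarrow> real"
  assumes "k \<ge> 1"
    and "0 < \<bar>a\<bar>" and "\<bar>a\<bar> < 1"
    and "\<sigma> > 0"
    and "\<And>n. \<bar>\<alpha> n\<bar> \<le> \<sigma>"
    and "\<sigma> < (1 - \<bar>a\<bar>) / (1 - \<bar>a\<bar> ^ k)"
    and "\<And>n::nat. x (int n + 1) = a * x (int n) + \<alpha> n * tanh (x (int n) - a ^ k * x (int n - int k))"
  shows "(\<lambda>n::nat. x (int n)) \<longlonglongrightarrow> 0"
proof -
  define S where "S = (\<Sum>j<k. \<bar>a\<bar> ^ j)"
  define q where "q = \<sigma> * S"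
  have S_eq: "S = (1 - \<bar>a\<bar> ^ k) / (1 - \<bar>a\<bar>)"
    unfolding S_def using sum_gp_strict[of "\<bar>a\<bar>" k] assms(3) by simp
  have ak: "\<bar>a\<bar> ^ k < 1" using assms(1-3) by (simp add: power_less_one_iff)
  have S1: "S \<ge> 1"
  proof -
    have "\<bar>a\<bar> ^ 0 \<le> S" unfolding S_def using assms(1) by (intro member_le_sum) auto
    then show ?thesis by simp
  qed
  have q1: "q < 1"
  proof -
    have "\<sigma> * (1 - \<bar>a\<bar> ^ k) < 1 - \<bar>a\<bar>" using assms(6) ak by (simp add: pos_less_divide_eq)
    then show ?thesis unfolding q_def S_eq using assms(3) by (simp add: pos_divide_less_eq)
  qed
  have q0: "q > 0" unfolding q_def using S1 assms(4) by simp
  define r where "r = root k q"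
  have rk: "r ^ k = q" unfolding r_def using assms(1) q0 by simp
  have r0: "0 < r" unfolding r_def using assms(1) q0 by (simp add: real_root_gt_zero)
  have r1: "r < 1" unfolding r_def using assms(1) q1 by simp
  define D where "D m = x m - a * x (m - 1)" for m
  define e where "e p = \<bar>D (int p + 1 - int k)\<bar>" for p
  have rec: "e p \<le> \<sigma> * (\<Sum>j<k. \<bar>a\<bar> ^ j * e (p - 1 - j))" if "p \<ge> k" for p
  proof -
    define n where "n = p - k"
    have Dn: "D (int p + 1 - int k) = \<alpha> n * tanh (x (int n) - a ^ k * x (int n - int k))"
    proof -
      have nn: "int p + 1 - int k = int n + 1" "int p + 1 - int k - 1 = int n"
        unfolding n_def using that by auto
      show ?thesis unfolding D_def nn using assms(7)[of n] by simp
    qed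
    have u: "x (int n) - a ^ k * x (int n - int k) = (\<Sum>j<k. a ^ j * D (int n - int j))"
      unfolding D_def by (rule telesc)
    have ej: "\<bar>D (int n - int j)\<bar> = e (p - 1 - j)" if "j < k" for j
      unfolding e_def n_def using that \<open>p \<ge> k\<close> by (simp add: of_nat_diff algebra_simps)
    have "e p = \<bar>\<alpha> n\<bar> * \<bar>tanh (x (int n) - a ^ k * x (int n - int k))\<bar>"
      unfolding e_def Dn by (simp add: abs_mult)
    also have "\<dots> \<le> \<sigma> * \<bar>x (int n) - a ^ k * x (int n - int k)\<bar>"
      using assms(5)[of n] abs_tanh_le by (intro mult_mono) auto
    also have "\<bar>x (int n) - a ^ k * x (int n - int k)\<bar> \<le> (\<Sum>j<k. \<bar>a\<bar> ^ j * e (p - 1 - j))"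
      unfolding u using ej by (auto intro!: order_trans[OF sum_abs] sum_mono simp: abs_mult power_abs)
    finally show ?thesis using assms(4) by (simp add: mult_left_mono)
  qed
  define C where "C = (\<Sum>p<k. e p / r ^ p)"
  have e0: "e p \<ge> 0" for p unfolding e_def by simp
  have bound: "e p \<le> C * r ^ p" for p
  proof (induction p rule: less_induct)
    case (less p)
    show ?case
    proof (cases "p < k")
      case True
      have "e p / r ^ p \<le> C" unfolding C_def
        using True e0 r0 by (intro member_le_sum) auto
      then show ?thesis using r0 by (simp add: divide_le_eq mult.commute)
    next
      case False
      then have pk: "p \<ge> k" by simp
      have "e p \<le> \<sigma> * (\<Sum>j<k. \<bar>a\<bar> ^ j * e (p - 1 - j))" using rec pk by blast
      also have "\<dots> \<le> \<sigma> * (\<Sum>j<k. \<bar>a\<bar> ^ j * (C * r ^ p / q))"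
      proof (rule mult_left_mono, rule sum_mono)
        fix j assume j: "j \<in> {..<k}"
        have "e (p - 1 - j) \<le> C * r ^ (p - 1 - j)" using less pk j by auto
        moreover have "C \<ge> 0" unfolding C_def using e0 r0 by (intro sum_nonneg) auto
        moreover have "r ^ (p - 1 - j) * q \<le> r ^ p"
        proof -
          have "r ^ k \<le> r ^ (j + 1)" using j r0 r1 by (intro power_decreasing) auto
          then have "r ^ (p - 1 - j) * q \<le> r ^ (p - 1 - j) * r ^ (j+1)"
            using rk r0 by (intro mult_left_mono) auto
          also have "\<dots> = r ^ p" proof -
            have "p - 1 - j + (j + 1) = p" using j pk by auto
            then show ?thesis by (metis power_add)
          qed
          finally show ?thesis .
        qed
        ultimately have "e (p - 1 - j) \<le> C * r ^ p / q"
          using q0 r0 by (smt (verit, best) mult_left_mono mult.assoc pos_le_divide_eq)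
        then show "\<bar>a\<bar> ^ j * e (p - 1 - j) \<le> \<bar>a\<bar> ^ j * (C * r ^ p / q)"
          by (intro mult_left_mono) auto
      qed (use assms(4) in auto)
      also have "\<dots> = \<sigma> * S * (C * r ^ p / q)"
        unfolding S_def by (simp only: sum_distrib_right mult.assoc)
      also have "\<dots> = q * (C * r ^ p / q)" unfolding q_def by simp
      also have "\<dots> = C * r ^ p" using q0 by simp
      finally show ?thesis .
    qed
  qed
  have C0: "C \<ge> 0" unfolding C_def using e0 r0 by (intro sum_nonneg) auto
  have dn: "\<bar>x (int n + 1) - a * x (int n)\<bar> \<le> C * r ^ n" for n
  proof -
    have "\<bar>x (int n + 1) - a * x (int n)\<bar> = e (n + k)" unfolding e_def D_def by simp
    also have "\<dots> \<le> C * r ^ (n + k)" by (rule bound)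
    also have "\<dots> \<le> C * r ^ n" using C0 r0 r1 by (intro mult_left_mono power_decreasing) auto
    finally show ?thesis .
  qed
  define \<rho> where "\<rho> = (max r \<bar>a\<bar> + 1) / 2"
  have \<rho>1: "\<rho> < 1" and \<rho>r: "r < \<rho>" and \<rho>a: "\<bar>a\<bar> < \<rho>"
    unfolding \<rho>_def using r1 assms(3) by auto
  define K where "K = max \<bar>x 0\<bar> (C / (\<rho> - \<bar>a\<bar>))"
  have xb: "\<bar>x (int n)\<bar> \<le> K * \<rho> ^ n" for n
  proof (induction n)
    case 0 then show ?case unfolding K_def by simp
  next
    case (Suc n)
    have "\<bar>x (int (Suc n))\<bar> \<le> \<bar>a\<bar> * \<bar>x (int n)\<bar> + C * r ^ n"
    proof -
      have "x (int (Suc n)) = a * x (int n) + (x (int n + 1) - a * x (int n))" by (simp add: add.commute)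
      then have "\<bar>x (int (Suc n))\<bar> \<le> \<bar>a * x (int n)\<bar> + \<bar>x (int n + 1) - a * x (int n)\<bar>"
        by (metis abs_triangle_ineq)
      then show ?thesis using dn[of n] by (simp add: abs_mult)
    qed
    also have "\<dots> \<le> \<bar>a\<bar> * (K * \<rho> ^ n) + C * \<rho> ^ n"
      using Suc r0 \<rho>r C0 by (intro add_mono mult_left_mono power_mono) auto
    also have "C \<le> K * (\<rho> - \<bar>a\<bar>)" 
    proof -
      have "C / (\<rho> - \<bar>a\<bar>) \<le> K" unfolding K_def by simp
      then show ?thesis using \<rho>a by (simp add: pos_divide_le_eq)
    qed
    then have "C * \<rho> ^ n \<le> K * (\<rho> - \<bar>a\<bar>) * \<rho> ^ n" using r0 \<rho>r by (intro mult_right_mono) auto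
    then have "\<bar>a\<bar> * (K * \<rho> ^ n) + C * \<rho> ^ n \<le> K * \<rho> ^ Suc n" by (simp add: algebra_simps)
    finally show ?case .
  qed
  have "(\<lambda>n. K * \<rho> ^ n) \<longlonglongrightarrow> 0"
    using \<rho>1 \<rho>a by (intro tendsto_mult_right_zero LIMSEQ_power_zero) auto
  then show ?thesis
  proof (rule tendsto_0_le[where K=1])
    have "K \<ge> 0" unfolding K_def by simp
    moreover have "\<rho> > 0" using \<rho>a by simp
    ultimately show "\<forall>\<^sub>F n in sequentially. norm (x (int n)) \<le> norm (K * \<rho> ^ n) * 1"
      using xb by (simp add: abs_mult)
  qed
qed
end
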